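(* Let $s\ge1$ and $\varphi\in\mathcal B_s\cap\big(S_1(\zeta_2,\zeta_{22})\circ S_{s-1}(A)\big)$. Then $\varphi\in S_s(\zeta_2,\zeta_{22})$.
   Context: Forms on $\mathbf P^1\times\mathbf P^1$: $\zeta_i=dz_i/z_i$, $\zeta_{ii}=dz_i/(1-z_i)$ ($i=1,2$), $\zeta_{12}=d(z_1z_2)/(1-z_1z_2)$; $A=\{\zeta_1,\zeta_{11},\zeta_2,\zeta_{22},\zeta_{12}\}$. $S_s(A)$ is the vector space with basis the words of length $s$ in $A$, $\circ$ is concatenation. $S_1(\zeta_2,\zeta_{22})\circ S_{s-1}(A)$ is the span of words of length $s$ whose first letter is $\zeta_2$ or $\zeta_{22}$, and $S_s(\zeta_2,\zeta_{22})$ the span of words of length $s$ in the letters $\zeta_2,\zeta_{22}$ only. A homogeneous element $\sum_Ic_I\omega_{i_1}\circ\cdots\circ\omega_{i_s}\in S_s(A)$ satisfies Chen's integrability condition if for each $1\le l<s$, $\sum_Ic_I\omega_{i_1}\otimes\cdots\otimes(\omega_{i_l}\wedge\omega_{i_{l+1}})\otimes\cdots\otimes\omega_{i_s}=0$ as a multiple differential form; $\mathcal B_s$ is the space of elements of $S_s(A)$ satisfying it. *)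

theory Defs
  imports Complex_Main
begin

datatype letter = Z1 | Z11 | Z2 | Z22 | Z12

text \<open>Coordinates of the 1-forms in the basis dz1 (component 0), dz2 (component 1),
  as functions of the point (z1,z2).\<close>
fun coef :: "letter \<Rightarrow> nat \<Rightarrow> complex \<times> complex \<Rightarrow> complex" where
  "coef Z1 j (z1, z2) = (if j = 0 then 1 / z1 else 0)"
| "coef Z11 j (z1, z2) = (if j = 0 then 1 / (1 - z1) else 0)"
| "coef Z2 j (z1, z2) = (if j = 0 then 0 else 1 / z2)"
| "coef Z22 j (z1, z2) = (if j = 0 then 0 else 1 / (1 - z2))"
| "coef Z12 j (z1, z2) = (if j = 0 then z2 / (1 - z1 * z2) else z1 / (1 - z1 * z2))"

text \<open>Coefficient of dz1 \<and> dz2 in the 2-form a \<and> b.\<close>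
definition wedge :: "letter \<Rightarrow> letter \<Rightarrow> complex \<times> complex \<Rightarrow> complex" where
  "wedge a b p = coef a 0 p * coef b 1 p - coef a 1 p * coef b 0 p"

text \<open>Open set of P^1 x P^1 (affine chart) off the polar divisor, where all forms are regular.\<close>
definition U :: "(complex \<times> complex) set" where
  "U = {(z1, z2). z1 \<noteq> 0 \<and> z1 \<noteq> 1 \<and> z2 \<noteq> 0 \<and> z2 \<noteq> 1 \<and> z1 * z2 \<noteq> 1}"

definition words :: "nat \<Rightarrow> letter list set" where
  "words s = {w. length w = s}"

definition S :: "nat \<Rightarrow> (letter list \<Rightarrow> complex) set" where
  "S s = {c. \<forall>w. c w \<noteq> 0 \<longrightarrow> length w = s}"

text \<open>The multiple differential form w_1 (x) ... (x) (w_{l+1} \<and> w_{l+2}) (x) ... (x) w_s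
  (0-based wedge position l), realised as a function on U^(s-1): the k-th tensor factor
  is evaluated at the k-th point, 1-form factors are taken in component js k, the 2-form
  factor is its dz1\<and>dz2 coefficient. This realisation of the tensor product over C is
  injective.\<close>
definition chen_term :: "letter list \<Rightarrow> nat \<Rightarrow> (nat \<Rightarrow> nat) \<Rightarrow> (nat \<Rightarrow> complex \<times> complex) \<Rightarrow> complex" where
  "chen_term w l js ps =
     (\<Prod>k<l. coef (w ! k) (js k) (ps k)) *
     wedge (w ! l) (w ! Suc l) (ps l) *
     (\<Prod>k\<in>{Suc (Suc l)..<length w}. coef (w ! k) (js (k - 1)) (ps (k - 1)))"

definition chen_integrable :: "nat \<Rightarrow> (letter list \<Rightarrow> complex) \<Rightarrow> bool" where
  "chen_integrable s c \<longleftrightarrow>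
     (\<forall>l. Suc l < s \<longrightarrow> (\<forall>js ps. (\<forall>k. ps k \<in> U) \<longrightarrow>
        (\<Sum>w\<in>words s. c w * chen_term w l js ps) = 0))"

definition B :: "nat \<Rightarrow> (letter list \<Rightarrow> complex) set" where
  "B s = {c \<in> S s. chen_integrable s c}"

definition S_first2 :: "nat \<Rightarrow> (letter list \<Rightarrow> complex) set" where
  "S_first2 s = {c \<in> S s. \<forall>w. c w \<noteq> 0 \<longrightarrow> w \<noteq> [] \<and> hd w \<in> {Z2, Z22}}"

definition S_only2 :: "nat \<Rightarrow> (letter list \<Rightarrow> complex) set" where
  "S_only2 s = {c \<in> S s. \<forall>w. c w \<noteq> 0 \<longrightarrow> set w \<subseteq> {Z2, Z22}}"

end

theory Submission
  imports Defs
begin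


lemma indep_tensor:
  fixes f :: "nat \<Rightarrow> 'b \<Rightarrow> 'x \<Rightarrow> complex" and key :: "nat \<Rightarrow> 'w \<Rightarrow> 'b"
  assumes indep: "\<And>k B d. k < n \<Longrightarrow> finite B \<Longrightarrow> B \<subseteq> K k \<Longrightarrow>
        (\<forall>x\<in>D k. (\<Sum>b\<in>B. d b * f k b x) = 0) \<Longrightarrow> \<forall>b\<in>B. d b = 0"
    and "finite W" and "\<forall>w\<in>W. \<forall>k<n. key k w \<in> K k"
    and "inj_on (\<lambda>w. map (\<lambda>k. key k w) [0..<n]) W"
    and "\<forall>xs. (\<forall>k<n. xs k \<in> D k) \<longrightarrow> (\<Sum>w\<in>W. c w * (\<Prod>k<n. f k (key k w) (xs k))) = 0"
  shows "\<forall>w\<in>W. c w = 0"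
  using assms
proof (induction n arbitrary: W c)
  case 0
  show ?case
  proof
    fix w assume w: "w \<in> W"
    have "W = {w}" using 0(4) w by (auto simp: inj_on_def)
    then show "c w = 0" using 0(5) by auto
  qed
next
  case (Suc m)
  note fW = Suc.prems(2)
  define B where "B = key m ` W"
  have fB: "finite B" using fW B_def by auto
  have BK: "B \<subseteq> K m" using Suc.prems(3) B_def by auto
  define Wb where "Wb b = {w \<in> W. key m w = b}" for b
  have inner: "(\<Sum>w\<in>Wb b. c w * (\<Prod>k<m. f k (key k w) (xs k))) = 0"
    if b: "b \<in> B" and xs: "\<forall>k<m. xs k \<in> D k" for b xs
  proof -
    let ?d = "\<lambda>b. (\<Sum>w\<in>Wb b. c w * (\<Prod>k<m. f k (key k w) (xs k)))"
    have "\<forall>t\<in>D m. (\<Sum>b\<in>B. ?d b * f m b t) = 0"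
    proof
      fix t assume t: "t \<in> D m"
      let ?xs = "xs(m := t)"
      have v: "\<forall>k<Suc m. ?xs k \<in> D k" using xs t by (auto simp: less_Suc_eq)
      have "(\<Sum>b\<in>B. ?d b * f m b t) = (\<Sum>b\<in>B. \<Sum>w\<in>Wb b. c w * (\<Prod>k<m. f k (key k w) (xs k)) * f m b t)"
        by (simp add: sum_distrib_right)
      also have "\<dots> = (\<Sum>b\<in>B. \<Sum>w\<in>Wb b. c w * (\<Prod>k<Suc m. f k (key k w) (?xs k)))"
        by (intro sum.cong refl) (auto simp: Wb_def mult.assoc)
      also have "\<dots> = (\<Sum>w\<in>W. c w * (\<Prod>k<Suc m. f k (key k w) (?xs k)))"
        unfolding Wb_def by (rule sum.group[OF fW fB]) (simp add: B_def)
      also have "\<dots> = 0" using Suc.prems(5) v by blast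
      finally show "(\<Sum>b\<in>B. ?d b * f m b t) = 0" .
    qed
    then have "\<forall>b\<in>B. ?d b = 0" using Suc.prems(1)[of m B ?d] fB BK by blast
    then show ?thesis using b by blast
  qed
  show ?case
  proof
    fix w assume w: "w \<in> W"
    let ?b = "key m w"
    have bB: "?b \<in> B" using w B_def by auto
    have "\<forall>w'\<in>Wb ?b. c w' = 0"
    proof (rule Suc.IH)
      show "\<And>k B d. k < m \<Longrightarrow> finite B \<Longrightarrow> B \<subseteq> K k \<Longrightarrow>
        (\<forall>x\<in>D k. (\<Sum>b\<in>B. d b * f k b x) = 0) \<Longrightarrow> \<forall>b\<in>B. d b = 0"
        by (rule Suc.prems(1)) auto
      show "finite (Wb ?b)" using fW Wb_def by auto
      show "\<forall>w\<in>Wb ?b. \<forall>k<m. key k w \<in> K k" using Suc.prems(3) Wb_def by auto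
      show "inj_on (\<lambda>w. map (\<lambda>k. key k w) [0..<m]) (Wb ?b)"
        using Suc.prems(4) unfolding inj_on_def Wb_def by auto
      show "\<forall>xs. (\<forall>k<m. xs k \<in> D k) \<longrightarrow> (\<Sum>w\<in>Wb ?b. c w * (\<Prod>k<m. f k (key k w) (xs k))) = 0"
        using inner[OF bB] by blast
    qed
    then show "c w = 0" using w Wb_def by auto
  qed
qed



lemma U_pt: "(2::complex,2) \<in> U" "(2::complex,3) \<in> U" "(3::complex,2) \<in> U" "(3::complex,3) \<in> U"
  "(4::complex,2) \<in> U" "(4::complex,3) \<in> U"
  by (auto simp: U_def)

lemma I1:
  assumes h: "\<And>j p. p \<in> U \<Longrightarrow> d Z1 * coef Z1 j p + d Z11 * coef Z11 j p + d Z2 * coef Z2 j p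
      + d Z22 * coef Z22 j p + d Z12 * coef Z12 j p = 0"
  shows "d a = 0"
proof -
  have e1: "d Z1 / 2 - d Z11 - d Z12 * 2 / 3 = 0" using h[OF U_pt(1), of 0] by (simp add: field_simps)
  have e2: "d Z1 / 2 - d Z11 - d Z12 * 3 / 5 = 0" using h[OF U_pt(2), of 0] by (simp add: field_simps)
  have e3: "d Z1 / 3 - d Z11 / 2 - d Z12 * 2 / 5 = 0" using h[OF U_pt(3), of 0] by (simp add: field_simps)
  have f1: "d Z2 / 2 - d Z22 - d Z12 * 2 / 3 = 0" using h[OF U_pt(1), of 1] by (simp add: field_simps)
  have f2: "d Z2 / 3 - d Z22 / 2 - d Z12 * 2 / 5 = 0" using h[OF U_pt(2), of 1] by (simp add: field_simps)
  have g5: "d Z12 = 0" using e1 e2 by algebra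
  have g1: "d Z1 = 0" using e1 e3 g5 by algebra
  have g2: "d Z11 = 0" using e1 g1 g5 by algebra
  have g3: "d Z2 = 0" using f1 f2 g5 by algebra
  have g4: "d Z22 = 0" using f1 g3 g5 by algebra
  show ?thesis using g1 g2 g3 g4 g5 by (cases a) simp_all
qed

lemma I2:
  assumes h: "\<And>p. p \<in> U \<Longrightarrow> y1*wedge Z2 Z1 p + y2*wedge Z2 Z11 p + y3*wedge Z2 Z12 p
     + y4*wedge Z22 Z1 p + y5*wedge Z22 Z11 p + y6*wedge Z22 Z12 p = 0"
  shows "y1 = 0 \<and> y2 = 0 \<and> y3 = 0 \<and> y4 = 0 \<and> y5 = 0 \<and> y6 = 0"
proof -
  note E = h[OF U_pt(1)] h[OF U_pt(2)] h[OF U_pt(3)] h[OF U_pt(4)] h[OF U_pt(5)] h[OF U_pt(6)]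
  note E' = E[simplified wedge_def, simplified, simplified field_simps]
  show ?thesis using E' by algebra
qed


definition keyf :: "nat \<Rightarrow> nat \<Rightarrow> letter list \<Rightarrow> letter list" where
  "keyf l k w = (if k < l then [w!k] else if k = l then [w!l, w!Suc l] else [w!Suc k])"

definition ff :: "nat \<Rightarrow> nat \<Rightarrow> letter list \<Rightarrow> nat \<times> (complex \<times> complex) \<Rightarrow> complex" where
  "ff l k b x = (if k = l then (case b of [a1,a2] \<Rightarrow> wedge a1 a2 (snd x) | _ \<Rightarrow> 0)
      else (case b of [a] \<Rightarrow> coef a (fst x) (snd x) | _ \<Rightarrow> 0))"

lemma prod_split:
  assumes "length w = Suc n" "l < n" "\<forall>k<n. ps k = snd (xs k)" "\<forall>k<n. js k = fst (xs k)"
  shows "(\<Prod>k<n. ff l k (keyf l k w) (xs k)) = chen_term w l js ps"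
proof -
  let ?g = "\<lambda>k. ff l k (keyf l k w) (xs k)"
  have "(\<Prod>k<n. ?g k) = (\<Prod>k\<in>{0..<l}. ?g k) * (\<Prod>k\<in>{l..<n}. ?g k)"
    using assms(2) by (simp add: prod.atLeastLessThan_concat lessThan_atLeast0)
  also have "(\<Prod>k\<in>{l..<n}. ?g k) = ?g l * (\<Prod>k\<in>{Suc l..<n}. ?g k)"
    using assms(2) by (simp add: prod.atLeast_Suc_lessThan)
  also have "(\<Prod>k\<in>{0..<l}. ?g k) = (\<Prod>k<l. coef (w ! k) (js k) (ps k))"
    using assms by (auto simp: lessThan_atLeast0 ff_def keyf_def intro!: prod.cong)
  also have "?g l = wedge (w ! l) (w ! Suc l) (ps l)"
    using assms by (simp add: ff_def keyf_def)
  also have "(\<Prod>k\<in>{Suc l..<n}. ?g k) = (\<Prod>k\<in>{Suc l..<n}. coef (w ! (k+1)) (js k) (ps k))"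
    using assms by (auto simp: ff_def keyf_def intro!: prod.cong)
  also have "\<dots> = (\<Prod>k\<in>{Suc l + 1..<n+1}. coef (w ! k) (js (k - 1)) (ps (k - 1)))"
    by (subst prod.shift_bounds_nat_ivl) simp
  finally show ?thesis using assms(1) by (simp add: chen_term_def)
qed


lemma UNIV_letter: "(UNIV :: letter set) = {Z1, Z11, Z2, Z22, Z12}"
  using letter.exhaust by auto

instance letter :: finite
  by standard (simp add: UNIV_letter)

lemma finite_words: "finite (words s)"
proof -
  have "words s = {xs. set xs \<subseteq> UNIV \<and> length xs = s}" by (auto simp: words_def)
  then show ?thesis using finite_lists_length_eq[of "UNIV :: letter set" s] by simp
qed

lemma indep_single:
  assumes "finite Bs" "Bs \<subseteq> {[a] | a. True}"
    and h: "\<forall>x\<in>{x. snd x \<in> U}. (\<Sum>b\<in>Bs. d b * (case b of [a] \<Rightarrow> coef a (fst x) (snd x) | _ \<Rightarrow> 0)) = 0"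
  shows "\<forall>b\<in>Bs. d b = 0"
proof
  fix b assume bB: "b \<in> Bs"
  then obtain a0 where b: "b = [a0]" using assms(2) by auto
  define e where "e a = (if [a] \<in> Bs then d [a] else 0)" for a
  have "e a0 = 0"
  proof (rule I1)
    fix j and p :: "complex \<times> complex" assume p: "p \<in> U"
    have Bs: "Bs = (\<lambda>a. [a]) ` {a. [a] \<in> Bs}" using assms(2) by auto
    have "0 = (\<Sum>b\<in>Bs. d b * (case b of [a] \<Rightarrow> coef a j p | _ \<Rightarrow> 0))" using bspec[OF h, of "(j,p)"] p by (simp only: fst_conv snd_conv mem_Collect_eq)
    also have "\<dots> = (\<Sum>a\<in>{a. [a] \<in> Bs}. d [a] * coef a j p)"
      by (subst Bs, subst sum.reindex) (auto simp: inj_on_def)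
    also have "\<dots> = (\<Sum>a\<in>UNIV. if a \<in> {a. [a] \<in> Bs} then d [a] * coef a j p else 0)"
      using sum.inter_restrict[of "UNIV :: letter set" "\<lambda>a. d [a] * coef a j p" "{a. [a] \<in> Bs}"] by simp
    also have "\<dots> = (\<Sum>a\<in>UNIV. e a * coef a j p)"
      by (intro sum.cong) (auto simp: e_def)
    also have "\<dots> = e Z1 * coef Z1 j p + e Z11 * coef Z11 j p + e Z2 * coef Z2 j p
      + e Z22 * coef Z22 j p + e Z12 * coef Z12 j p"
      by (simp add: UNIV_letter add.assoc)
    finally show "e Z1 * coef Z1 j p + e Z11 * coef Z11 j p + e Z2 * coef Z2 j p
      + e Z22 * coef Z22 j p + e Z12 * coef Z12 j p = 0" by simp
  qed
  then show "d b = 0" using b bB by (simp add: e_def)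
qed

definition Kw :: "letter list set" where
  "Kw = {[Z2,Z1],[Z2,Z11],[Z2,Z12],[Z22,Z1],[Z22,Z11],[Z22,Z12]}"

lemma indep_wedge:
  assumes "finite Bs" "Bs \<subseteq> Kw"
    and h: "\<forall>x\<in>{x. snd x \<in> U}. (\<Sum>b\<in>Bs. d b * (case b of [a1,a2] \<Rightarrow> wedge a1 a2 (snd x) | _ \<Rightarrow> 0)) = 0"
  shows "\<forall>b\<in>Bs. d b = 0"
proof -
  define e where "e b = (if b \<in> Bs then d b else 0)" for b
  let ?F = "\<lambda>b p. (case b of [a1,a2] \<Rightarrow> wedge a1 a2 p | _ \<Rightarrow> 0)"
  have "e [Z2,Z1] = 0 \<and> e [Z2,Z11] = 0 \<and> e [Z2,Z12] = 0 \<and> e [Z22,Z1] = 0 \<and> e [Z22,Z11] = 0 \<and> e [Z22,Z12] = 0"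
  proof (rule I2)
    fix p :: "complex \<times> complex" assume p: "p \<in> U"
    have "0 = (\<Sum>b\<in>Bs. d b * ?F b p)" using bspec[OF h, of "(undefined,p)"] p by (simp only: fst_conv snd_conv mem_Collect_eq)
    also have "\<dots> = (\<Sum>b\<in>Kw. if b \<in> Bs then d b * ?F b p else 0)"
    proof -
      have fK: "finite Kw" by (simp add: Kw_def)
      have "Kw \<inter> Bs = Bs" using assms(2) by auto
      then show ?thesis using sum.inter_restrict[OF fK, where g = "\<lambda>b. d b * ?F b p" and B = Bs] by simp
    qed
    also have "\<dots> = (\<Sum>b\<in>Kw. e b * ?F b p)"
      by (intro sum.cong) (auto simp: e_def)
    also have "\<dots> = e [Z2,Z1] * wedge Z2 Z1 p + e [Z2,Z11] * wedge Z2 Z11 p + e [Z2,Z12] * wedge Z2 Z12 p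
     + e [Z22,Z1] * wedge Z22 Z1 p + e [Z22,Z11] * wedge Z22 Z11 p + e [Z22,Z12] * wedge Z22 Z12 p"
      by (simp add: Kw_def add.assoc)
    finally show "e [Z2,Z1] * wedge Z2 Z1 p + e [Z2,Z11] * wedge Z2 Z11 p + e [Z2,Z12] * wedge Z2 Z12 p
     + e [Z22,Z1] * wedge Z22 Z1 p + e [Z22,Z11] * wedge Z22 Z11 p + e [Z22,Z12] * wedge Z22 Z12 p = 0" by simp
  qed
  then show ?thesis using assms(2) by (auto simp: e_def Kw_def)
qed

lemma wedge_22: "a \<in> {Z2, Z22} \<Longrightarrow> b \<in> {Z2, Z22} \<Longrightarrow> wedge a b p = 0"
  by (cases p) (auto simp: wedge_def)

lemma step_lemma:
  assumes S: "\<phi> \<in> S s" and C: "chen_integrable s \<phi>" and m: "1 \<le> m" "m < s"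
    and IH: "\<forall>w. \<phi> w \<noteq> 0 \<longrightarrow> (\<forall>i<m. w!i \<in> {Z2,Z22})"
    and w0: "\<phi> w0 \<noteq> 0"
  shows "w0 ! m \<in> {Z2,Z22}"
proof (rule ccontr)
  assume nw0: "w0 ! m \<notin> {Z2,Z22}"
  define l where "l = m - 1"
  define n where "n = s - 1"
  have lm: "Suc l = m" and sn: "s = Suc n" and ln: "l < n" using m by (auto simp: l_def n_def)
  define W where "W = {w \<in> words s. \<phi> w \<noteq> 0 \<and> w ! m \<notin> {Z2,Z22}}"
  define K where "K k = (if k = l then Kw else {[a] | a. True})" for k
  define D where "D k = {x :: nat \<times> (complex \<times> complex). snd x \<in> U}" for k :: nat
  have len0: "length w0 = s" using S w0 by (auto simp: S_def)
  have w0W: "w0 \<in> W" using len0 w0 nw0 by (auto simp: W_def words_def)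
  have "\<forall>w\<in>W. \<phi> w = 0"
  proof (rule indep_tensor[where f = "ff l" and key = "keyf l" and K = K and D = D and n = n])
    fix k B d assume k: "k < n" and fB: "finite B" and BK: "B \<subseteq> K k"
      and h: "\<forall>x\<in>D k. (\<Sum>b\<in>B. d b * ff l k b x) = 0"
    show "\<forall>b\<in>B. d b = 0"
    proof (cases "k = l")
      case True
      then show ?thesis using indep_wedge[OF fB] BK h by (simp add: K_def D_def ff_def)
    next
      case False
      then show ?thesis using indep_single[OF fB] BK h by (simp add: K_def D_def ff_def)
    qed
  next
    show "finite W" using finite_words by (simp add: W_def)
  next
    show "\<forall>w\<in>W. \<forall>k<n. keyf l k w \<in> K k"
    proof (intro ballI allI impI)
      fix w k assume w: "w \<in> W" and k: "k < n"
      show "keyf l k w \<in> K k"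
      proof (cases "k = l")
        case True
        have a: "w ! l \<in> {Z2,Z22}" using IH w lm by (auto simp: W_def)
        have b: "w ! Suc l \<notin> {Z2,Z22}" using w lm by (auto simp: W_def)
        show ?thesis using True a b by (cases "w ! Suc l") (auto simp: keyf_def K_def Kw_def)
      qed (auto simp: keyf_def K_def)
    qed
  next
    show "inj_on (\<lambda>w. map (\<lambda>k. keyf l k w) [0..<n]) W"
    proof (rule inj_onI)
      fix w w' assume w: "w \<in> W" and w': "w' \<in> W"
        and eq: "map (\<lambda>k. keyf l k w) [0..<n] = map (\<lambda>k. keyf l k w') [0..<n]"
      have ke: "keyf l k w = keyf l k w'" if "k < n" for k
        using arg_cong[OF eq, of "\<lambda>xs. xs ! k"] that by simp
      have lw: "length w = s" "length w' = s" using w w' by (auto simp: W_def words_def)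
      show "w = w'"
      proof (rule nth_equalityI)
        show "length w = length w'" using lw by simp
      next
        fix i assume i: "i < length w"
        show "w ! i = w' ! i"
        proof (cases "i < l")
          case True then show ?thesis using ke[of i] ln by (simp add: keyf_def)
        next
          case False
          show ?thesis
          proof (cases "i = l \<or> i = Suc l")
            case True then show ?thesis using ke[of l] ln by (auto simp: keyf_def)
          next
            case False
            then have "i - 1 < n" "\<not> i - 1 < l" "i - 1 \<noteq> l" "Suc (i - 1) = i"
              using i lw \<open>\<not> i < l\<close> sn by auto
            then show ?thesis using ke[of "i - 1"] by (simp add: keyf_def)
          qed
        qed
      qed
    qed
  next
    show "\<forall>xs. (\<forall>k<n. xs k \<in> D k) \<longrightarrow> (\<Sum>w\<in>W. \<phi> w * (\<Prod>k<n. ff l k (keyf l k w) (xs k))) = 0"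
    proof (intro allI impI)
      fix xs :: "nat \<Rightarrow> nat \<times> (complex \<times> complex)" assume xs: "\<forall>k<n. xs k \<in> D k"
      define js where "js k = fst (xs k)" for k
      define ps where "ps k = (if snd (xs k) \<in> U then snd (xs k) else (2,2))" for k
      have psU: "\<forall>k. ps k \<in> U" by (auto simp: ps_def U_def)
      have psx: "\<forall>k<n. ps k = snd (xs k)" using xs by (auto simp: ps_def D_def)
      have "(\<Sum>w\<in>W. \<phi> w * (\<Prod>k<n. ff l k (keyf l k w) (xs k))) = (\<Sum>w\<in>W. \<phi> w * chen_term w l js ps)"
        by (intro sum.cong refl, subst prod_split[where n = n]) 
           (use psx ln sn in \<open>auto simp: W_def words_def js_def\<close>)
      also have "\<dots> = (\<Sum>w\<in>words s. \<phi> w * chen_term w l js ps)"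
      proof (rule sum.mono_neutral_left)
        show "finite (words s)" by (rule finite_words)
        show "W \<subseteq> words s" by (auto simp: W_def)
        show "\<forall>w\<in>words s - W. \<phi> w * chen_term w l js ps = 0"
        proof
          fix w assume "w \<in> words s - W"
          then have "\<phi> w = 0 \<or> (\<phi> w \<noteq> 0 \<and> w ! m \<in> {Z2,Z22})" by (auto simp: W_def)
          then show "\<phi> w * chen_term w l js ps = 0"
          proof
            assume a: "\<phi> w \<noteq> 0 \<and> w ! m \<in> {Z2,Z22}"
            then have "w ! l \<in> {Z2,Z22}" using IH lm by auto
            then have "wedge (w ! l) (w ! Suc l) (ps l) = 0" using a lm wedge_22 by auto
            then show ?thesis by (simp add: chen_term_def)
          qed simp
        qed
      qed
      also have "\<dots> = 0" using C psU lm m(2) by (auto simp: chen_integrable_def)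
      finally show "(\<Sum>w\<in>W. \<phi> w * (\<Prod>k<n. ff l k (keyf l k w) (xs k))) = 0" .
    qed
  qed
  then show False using w0W w0 by blast
qed

theorem lemma5p8:
  fixes s :: nat and \<phi> :: "letter list \<Rightarrow> complex"
  assumes "s \<ge> 1"
    and "\<phi> \<in> B s \<inter> S_first2 s"
  shows "\<phi> \<in> S_only2 s"
proof -
  have S: "\<phi> \<in> S s" and C: "chen_integrable s \<phi>" and F: "\<phi> \<in> S_first2 s"
    using assms(2) by (auto simp: B_def)
  have P: "\<forall>w. \<phi> w \<noteq> 0 \<longrightarrow> (\<forall>i<m. w!i \<in> {Z2,Z22})" if "1 \<le> m" "m \<le> s" for m
    using that
  proof (induction m)
    case 0 then show ?case by simp
  next
    case (Suc m)
    show ?case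
    proof (cases "m = 0")
      case True
      then show ?thesis using F by (auto simp: S_first2_def hd_conv_nth)
    next
      case False
      then have IH: "\<forall>w. \<phi> w \<noteq> 0 \<longrightarrow> (\<forall>i<m. w!i \<in> {Z2,Z22})" using Suc by simp
      show ?thesis
      proof (intro allI impI)
        fix w i assume w: "\<phi> w \<noteq> 0" and i: "i < Suc m"
        show "w ! i \<in> {Z2,Z22}"
        proof (cases "i < m")
          case True then show ?thesis using IH w by auto
        next
          case False
          then have "i = m" using i by simp
          then show ?thesis using step_lemma[OF S C _ _ IH w] Suc.prems \<open>m \<noteq> 0\<close> by simp
        qed
      qed
    qed
  qed
  have "\<forall>w. \<phi> w \<noteq> 0 \<longrightarrow> set w \<subseteq> {Z2,Z22}"
  proof (intro allI impI)
    fix w assume w: "\<phi> w \<noteq> 0"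
    have "length w = s" using S w by (auto simp: S_def)
    have A: "\<forall>i<s. w ! i \<in> {Z2,Z22}" using P[of s] assms(1) w by blast
    show "set w \<subseteq> {Z2,Z22}"
    proof
      fix x assume "x \<in> set w"
      then obtain i where "i < length w" "x = w ! i" by (auto simp: in_set_conv_nth)
      then show "x \<in> {Z2,Z22}" using A \<open>length w = s\<close> by auto
    qed
  qed
  then show ?thesis using S by (simp add: S_only2_def)
qed

end
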